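(* For all $t\in\mathbb N$ we have $\lvert v_t^\alpha-v_t^\beta\rvert\le 48$.
   Context: Let $\mathsf r(n)$ be the number of (overlapping) occurrences of $\mathtt{11}$ in the binary expansion of $n\in\mathbb N=\{0,1,\dots\}$, and $d(t,n)=\mathsf r(n+t)-\mathsf r(n)$. Let $a_t(k)$, $b_t(k)$ ($k\in\mathbb Z$) be the asymptotic densities (which exist and define probability distributions on $\mathbb Z$) of $\{n:d(t,2n)=k\}$ and $\{n:d(t,2n+1)=k\}$. Let $v_t^\alpha$ and $v_t^\beta$ denote the variances of the distributions $a_t$ and $b_t$ respectively. *)

theory Defs
  imports "HOL-Analysis.Analysis"
begin

definition r :: "nat \<Rightarrow> nat" where
  "r n = card {i. bit n i \<and> bit n (Suc i)}"

definition d :: "nat \<Rightarrow> nat \<Rightarrow> int" where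
  "d t n = int (r (n + t)) - int (r n)"

text \<open>Asymptotic density of a set of naturals (the limit exists in the cases used).\<close>
definition asym_density :: "nat set \<Rightarrow> real" where
  "asym_density S = lim (\<lambda>N. real (card (S \<inter> {..<N})) / real N)"

definition a :: "nat \<Rightarrow> int \<Rightarrow> real" where
  "a t k = asym_density {n. d t (2 * n) = k}"

definition b :: "nat \<Rightarrow> int \<Rightarrow> real" where
  "b t k = asym_density {n. d t (2 * n + 1) = k}"

definition variance_int :: "(int \<Rightarrow> real) \<Rightarrow> real" where
  "variance_int p = (let \<mu> = (\<Sum>\<^sub>\<infinity>k\<in>UNIV. real_of_int k * p k)
                      in \<Sum>\<^sub>\<infinity>k\<in>UNIV. (real_of_int k - \<mu>)^2 * p k)"

definition v_alpha :: "nat \<Rightarrow> real" where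
  "v_alpha t = variance_int (a t)"

definition v_beta :: "nat \<Rightarrow> real" where
  "v_beta t = variance_int (b t)"

end

theory Submission
  imports Defs "HOL-Real_Asymp.Real_Asymp"
begin

definition mix :: "(int \<Rightarrow> real) \<Rightarrow> (int \<Rightarrow> real) \<Rightarrow> int \<Rightarrow> real" where
  "mix p q = (\<lambda>k. (p k + q k) / 2)"
definition shift :: "int \<Rightarrow> (int \<Rightarrow> real) \<Rightarrow> int \<Rightarrow> real" where
  "shift c p = (\<lambda>k. p (k - c))"

definition SW :: "(int \<Rightarrow> real) \<Rightarrow> (int \<Rightarrow> real) \<Rightarrow> bool" where
  "SW w p \<longleftrightarrow> (\<lambda>k. w k * p k) summable_on UNIV"
definition W :: "(int \<Rightarrow> real) \<Rightarrow> (int \<Rightarrow> real) \<Rightarrow> real" where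
  "W w p = infsum (\<lambda>k. w k * p k) UNIV"

abbreviation w0 :: "int \<Rightarrow> real" where "w0 \<equiv> (\<lambda>_. 1)"
abbreviation w1 :: "int \<Rightarrow> real" where "w1 \<equiv> (\<lambda>k. real_of_int k)"
abbreviation w2 :: "int \<Rightarrow> real" where "w2 \<equiv> (\<lambda>k. (real_of_int k)^2)"

definition good :: "(int \<Rightarrow> real) \<Rightarrow> bool" where
  "good p \<longleftrightarrow> SW w0 p \<and> SW w1 p \<and> SW w2 p"

lemma SW_add: "SW u p \<Longrightarrow> SW v p \<Longrightarrow> SW (\<lambda>k. u k + v k) p"
  unfolding SW_def by (simp add: distrib_right summable_on_add)
lemma W_add: "SW u p \<Longrightarrow> SW v p \<Longrightarrow> W (\<lambda>k. u k + v k) p = W u p + W v p"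
  unfolding SW_def W_def by (simp add: distrib_right infsum_add)
lemma SW_cmult: "SW u p \<Longrightarrow> SW (\<lambda>k. c * u k) p"
  unfolding SW_def by (simp add: mult.assoc summable_on_cmult_right)
lemma W_cmult: "SW u p \<Longrightarrow> W (\<lambda>k. c * u k) p = c * W u p"
  unfolding SW_def W_def by (simp add: mult.assoc infsum_cmult_right)

lemma SW_mix: "SW w p \<Longrightarrow> SW w q \<Longrightarrow> SW w (mix p q)"
proof -
  assume "SW w p" "SW w q"
  then have "(\<lambda>k. (1/2) * (w k * p k + w k * q k)) summable_on UNIV"
    unfolding SW_def by (intro summable_on_cmult_right summable_on_add)
  moreover have "(\<lambda>k. (1/2) * (w k * p k + w k * q k)) = (\<lambda>k. w k * mix p q k)"
    unfolding mix_def by (rule ext) (simp add: field_simps)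
  ultimately show ?thesis unfolding SW_def by simp
qed

lemma W_mix: "SW w p \<Longrightarrow> SW w q \<Longrightarrow> W w (mix p q) = (W w p + W w q) / 2"
proof -
  assume h: "SW w p" "SW w q"
  have "(\<lambda>k. w k * mix p q k) = (\<lambda>k. (1/2) * (w k * p k + w k * q k))"
    unfolding mix_def by (rule ext) (simp add: field_simps)
  then have "W w (mix p q) = infsum (\<lambda>k. (1/2) * (w k * p k + w k * q k)) UNIV" unfolding W_def by simp
  also have "\<dots> = (1/2) * infsum (\<lambda>k. w k * p k + w k * q k) UNIV"
    by (rule infsum_cmult_right) (use h in \<open>simp add: SW_def summable_on_add\<close>)
  also have "\<dots> = (1/2) * (W w p + W w q)"
    using h unfolding SW_def W_def by (subst infsum_add) auto
  finally show ?thesis by simp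
qed

lemma bij_shift: "bij_betw (\<lambda>k::int. k + c) UNIV UNIV"
  by (rule bij_betwI[of _ _ _ "\<lambda>k. k - c"]) auto

lemma SW_shift: "SW w (shift c p) \<longleftrightarrow> SW (\<lambda>k. w (k + c)) p"
  unfolding SW_def shift_def
  using summable_on_reindex_bij_betw[OF bij_shift[of c], of "\<lambda>k. w k * p (k - c)"] by simp

lemma W_shift: "W w (shift c p) = W (\<lambda>k. w (k + c)) p"
  unfolding W_def shift_def
  using infsum_reindex_bij_betw[OF bij_shift[of c], of "\<lambda>k. w k * p (k - c)"] by simp

lemma good_mix: "good p \<Longrightarrow> good q \<Longrightarrow> good (mix p q)"
  unfolding good_def using SW_mix by blast

lemma shift_w1: "(\<lambda>k. w1 (k + c)) = (\<lambda>k. w1 k + real_of_int c * w0 k)" by auto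
lemma shift_w2: "(\<lambda>k. w2 (k + c)) = (\<lambda>k. w2 k + ((2 * real_of_int c) * w1 k + (real_of_int c)^2 * w0 k))"
  by (auto simp: power2_eq_square algebra_simps)

lemma good_shift:
  assumes "good p"
  shows "good (shift c p)" "W w0 (shift c p) = W w0 p"
    "W w1 (shift c p) = W w1 p + real_of_int c * W w0 p"
    "W w2 (shift c p) = W w2 p + 2 * real_of_int c * W w1 p + (real_of_int c)^2 * W w0 p"
proof -
  have s0: "SW w0 p" and s1: "SW w1 p" and s2: "SW w2 p" using assms unfolding good_def by auto
  have "SW (\<lambda>k. w0 (k + c)) p" using s0 by simp
  moreover have "SW (\<lambda>k. w1 (k + c)) p" unfolding shift_w1 by (intro SW_add SW_cmult s0 s1)
  moreover have "SW (\<lambda>k. w2 (k + c)) p" unfolding shift_w2 by (intro SW_add SW_cmult s0 s1 s2)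
  ultimately show "good (shift c p)" unfolding good_def SW_shift by blast
  show "W w0 (shift c p) = W w0 p" unfolding W_shift by simp
  show "W w1 (shift c p) = W w1 p + real_of_int c * W w0 p"
    unfolding W_shift shift_w1 W_add[OF s1 SW_cmult[OF s0]] W_cmult[OF s0] by (rule refl)
  show "W w2 (shift c p) = W w2 p + 2 * real_of_int c * W w1 p + (real_of_int c)^2 * W w0 p"
    unfolding W_shift shift_w2 W_add[OF s2 SW_add[OF SW_cmult[OF s1] SW_cmult[OF s0]]] W_add[OF SW_cmult[OF s1] SW_cmult[OF s0]] W_cmult[OF s0] W_cmult[OF s1]
    by (simp add: algebra_simps)
qed

lemma variance_eq:
  assumes "good p" "W w0 p = 1"
  shows "variance_int p = W w2 p - (W w1 p)^2"
proof -
  have s0: "SW w0 p" and s1: "SW w1 p" and s2: "SW w2 p" using assms unfolding good_def by auto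
  define \<mu> where "\<mu> = W w1 p"
  have e: "(\<lambda>k. (real_of_int k - \<mu>)^2) = (\<lambda>k. w2 k + ((-2*\<mu>) * w1 k + \<mu>^2 * w0 k))"
    by (auto simp: power2_eq_square algebra_simps)
  have "variance_int p = W (\<lambda>k. (real_of_int k - \<mu>)^2) p"
    unfolding variance_int_def Let_def \<mu>_def W_def by simp
  also have "\<dots> = W w2 p - 2 * \<mu> * \<mu> + \<mu>^2 * W w0 p"
    unfolding e W_add[OF s2 SW_add[OF SW_cmult[OF s1] SW_cmult[OF s0]]] W_add[OF SW_cmult[OF s1] SW_cmult[OF s0]] W_cmult[OF s0] W_cmult[OF s1]
    by (simp add: algebra_simps \<mu>_def)
  finally show ?thesis using assms(2) unfolding \<mu>_def by (simp add: power2_eq_square)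
qed

lemma fin_supp:
  assumes "finite F" "\<And>k. k \<notin> F \<Longrightarrow> f k = 0"
  shows "f summable_on UNIV" "infsum f UNIV = sum f F"
proof -
  have "f summable_on UNIV \<longleftrightarrow> f summable_on F"
    by (rule summable_on_cong_neutral) (use assms in auto)
  then show "f summable_on UNIV" using assms(1) by simp
  have "infsum f UNIV = infsum f F"
    by (rule infsum_cong_neutral) (use assms in auto)
  then show "infsum f UNIV = sum f F" using assms(1) by simp
qed

lemma good_fin:
  assumes "finite F" "\<And>k. k \<notin> F \<Longrightarrow> p k = 0"
  shows "good p" "W w p = (\<Sum>k\<in>F. w k * p k)"
proof -
  have "SW w p" for w unfolding SW_def by (rule fin_supp(1)[OF assms(1)]) (simp add: assms(2))
  then show "good p" unfolding good_def by simp
  show "W w p = (\<Sum>k\<in>F. w k * p k)" unfolding W_def by (rule fin_supp(2)[OF assms(1)]) (simp add: assms(2))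
qed




lemma bit_lt: "bit (n::nat) i \<Longrightarrow> i < n"
proof (rule ccontr)
  assume b: "bit n i" and "\<not> i < n"
  then have "n < 2^i" using less_exp[of n] power_increasing[of n i "2::nat"] by linarith
  then have "n div 2^i = 0" by simp
  then show False using b by (simp add: bit_iff_odd)
qed

lemma finite_bits: "finite {i. bit (n::nat) i \<and> P i}"
  by (rule finite_subset[of _ "{..<n}"]) (auto dest: bit_lt)

lemma bit_2m_0: "\<not> bit (2*m::nat) 0" by (simp add: bit_0)
lemma bit_2m_Suc: "bit (2*m::nat) (Suc i) = bit m i" by (simp add: bit_Suc)
lemma bit_2m1_0: "bit (2*m+1::nat) 0" by (simp add: bit_0)
lemma bit_2m1_Suc: "bit (2*m+1::nat) (Suc i) = bit m i" by (simp add: bit_Suc)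

lemma r_even: "r (2*m) = r m"
proof -
  have "{i. bit (2*m) i \<and> bit (2*m) (Suc i)} = Suc ` {i. bit m i \<and> bit m (Suc i)}"
  proof (intro set_eqI iffI)
    fix x assume "x \<in> {i. bit (2*m) i \<and> bit (2*m) (Suc i)}"
    then show "x \<in> Suc ` {i. bit m i \<and> bit m (Suc i)}"
    proof (cases x)
      case 0 then show ?thesis using \<open>x \<in> _\<close> bit_2m_0[of m] by simp
    next
      case (Suc j) then show ?thesis using \<open>x \<in> _\<close> by (simp only: bit_2m_Suc mem_Collect_eq) blast
    qed
  qed (auto simp only: bit_2m_Suc mem_Collect_eq)
  then show ?thesis unfolding r_def by (simp add: card_image)
qed

lemma r_odd: "r (2*m+1) = r m + (if odd m then 1 else 0)"
proof -
  have "{i. bit (2*m+1) i \<and> bit (2*m+1) (Suc i)} = (if odd m then {0} else {}) \<union> Suc ` {i. bit m i \<and> bit m (Suc i)}"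
  proof (intro set_eqI iffI)
    fix x assume "x \<in> {i. bit (2*m+1) i \<and> bit (2*m+1) (Suc i)}"
    then show "x \<in> (if odd m then {0} else {}) \<union> Suc ` {i. bit m i \<and> bit m (Suc i)}"
    proof (cases x)
      case 0 then show ?thesis using \<open>x \<in> _\<close> bit_2m1_Suc[of m 0] by (simp add: bit_0)
    next
      case (Suc j) then show ?thesis using \<open>x \<in> _\<close> by (simp only: bit_2m1_Suc mem_Collect_eq) blast
    qed
  next
    fix x assume "x \<in> (if odd m then {0} else {}) \<union> Suc ` {i. bit m i \<and> bit m (Suc i)}"
    then show "x \<in> {i. bit (2*m+1) i \<and> bit (2*m+1) (Suc i)}"
      by (auto simp only: bit_2m1_Suc bit_2m1_0 mem_Collect_eq bit_0 split: if_splits) simp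
  qed
  moreover have "finite {i. bit m i \<and> bit m (Suc i)}" by (rule finite_bits)
  ultimately show ?thesis unfolding r_def by (simp add: card_image)
qed

definition ind :: "bool \<Rightarrow> int" where "ind P = (if P then 1 else 0)"

lemma d_ee: "d (2 * s) (2*m) = d s m"
  unfolding d_def by (metis add_mult_distrib2 r_even)
lemma d_eo: "d (2 * s) (2*m+1) = d s m + ind (odd (m+s)) - ind (odd m)"
proof -
  have "2*m+1+2 * s = 2*(m+s)+1" by simp
  then show ?thesis unfolding d_def ind_def by (simp only: r_odd) auto
qed
lemma d_oe: "d (2 * s+1) (2*m) = d s m + ind (odd (m+s))"
proof -
  have "2*m+(2 * s+1) = 2*(m+s)+1" by simp
  then show ?thesis unfolding d_def ind_def by (simp only: r_odd r_even) auto
qed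
lemma d_oo: "d (2 * s+1) (2*m+1) = d (s+1) m - ind (odd m)"
proof -
  have "2*m+1+(2 * s+1) = 2*(m+(s+1))" by simp
  then show ?thesis unfolding d_def ind_def by (simp only: r_odd r_even) auto
qed



definition hasd :: "nat set \<Rightarrow> real \<Rightarrow> bool" where
  "hasd S x \<longleftrightarrow> (\<lambda>N. real (card (S \<inter> {..<N})) / real N) \<longlonglongrightarrow> x"

lemma hasd_density: "hasd S x \<Longrightarrow> asym_density S = x"
  unfolding hasd_def asym_density_def by (rule limI)

lemma cnt_split:
  "card ({n. (P::nat\<Rightarrow>bool) n} \<inter> {..<N}) = card ({m. P (2*m)} \<inter> {..<(N+1) div 2}) + card ({m. P (2*m+1)} \<inter> {..<N div 2})"
proof -
  have eq: "{n. P n} \<inter> {..<N} = (\<lambda>m. 2*m) ` ({m. P (2*m)} \<inter> {..<(N+1) div 2}) \<union> (\<lambda>m. 2*m+1) ` ({m. P (2*m+1)} \<inter> {..<N div 2})"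
  proof (intro set_eqI iffI)
    fix n assume n: "n \<in> {n. P n} \<inter> {..<N}"
    show "n \<in> (\<lambda>m. 2*m) ` ({m. P (2*m)} \<inter> {..<(N+1) div 2}) \<union> (\<lambda>m. 2*m+1) ` ({m. P (2*m+1)} \<inter> {..<N div 2})"
    proof (cases "even n")
      case True
      then obtain m where "n = 2*m" by blast
      then show ?thesis using n by auto
    next
      case False
      then obtain m where "n = 2*m+1" using oddE by blast
      then show ?thesis using n by auto
    qed
  qed auto
  have "card ({n. P n} \<inter> {..<N}) = card ((\<lambda>m. 2*m) ` ({m. P (2*m)} \<inter> {..<(N+1) div 2})) + card ((\<lambda>m. 2*m+1) ` ({m. P (2*m+1)} \<inter> {..<N div 2}))"
    unfolding eq by (rule card_Un_disjoint) (auto, presburger)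
  also have "\<dots> = card ({m. P (2*m)} \<inter> {..<(N+1) div 2}) + card ({m. P (2*m+1)} \<inter> {..<N div 2})"
    by (subst card_image, simp add: inj_on_def)+ simp
  finally show ?thesis .
qed

lemma hl_a: "real N / (2 * real N) \<le> real ((N+1) div 2) / real N"
proof (cases "N = 0")
  case False
  have "N \<le> 2*((N+1) div 2)" by presburger
  then have "real N \<le> 2 * real ((N+1) div 2)" by linarith
  then show ?thesis using False by (simp add: field_simps)
qed simp

lemma hl_b: "real ((N+1) div 2) / real N \<le> (real N + 1) / (2 * real N)"
proof (cases "N = 0")
  case False
  have "2*((N+1) div 2) \<le> N + 1" by presburger
  then have "2 * real ((N+1) div 2) \<le> real N + 1" by linarith
  then show ?thesis using False by (simp add: field_simps)
qed simp

lemma hl_c: "(real N - 1) / (2 * real N) \<le> real (N div 2) / real N"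
proof (cases "N = 0")
  case False
  have "N \<le> 2*(N div 2) + 1" by presburger
  then have "real N - 1 \<le> 2 * real (N div 2)" by linarith
  then have "(real N - 1)/2 \<le> real (N div 2)" by (simp add: field_simps)
  then have "((real N - 1)/2) / real N \<le> real (N div 2) / real N"
    by (rule divide_right_mono) simp
  then show ?thesis by simp
qed simp

lemma hl_d: "real (N div 2) / real N \<le> real N / (2 * real N)"
proof (cases "N = 0")
  case False
  have "2*(N div 2) \<le> N" by presburger
  then have "2 * real (N div 2) \<le> real N" by linarith
  then show ?thesis using False by (simp add: field_simps)
qed simp

lemma half_lim1: "(\<lambda>N. real ((N+1) div 2) / real N) \<longlonglongrightarrow> 1/2"
proof (rule tendsto_sandwich)
  show "\<forall>\<^sub>F N in sequentially. real N / (2 * real N) \<le> real ((N+1) div 2) / real N"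
    using hl_a by simp
  show "\<forall>\<^sub>F N in sequentially. real ((N+1) div 2) / real N \<le> (real N + 1) / (2 * real N)"
    using hl_b by simp
  show "(\<lambda>N. real N / (2 * real N)) \<longlonglongrightarrow> 1/2" by real_asymp
  show "(\<lambda>N. (real N + 1) / (2 * real N)) \<longlonglongrightarrow> 1/2" by real_asymp
qed

lemma half_lim2: "(\<lambda>N. real (N div 2) / real N) \<longlonglongrightarrow> 1/2"
proof (rule tendsto_sandwich)
  show "\<forall>\<^sub>F N in sequentially. (real N - 1) / (2 * real N) \<le> real (N div 2) / real N"
    using hl_c by simp
  show "\<forall>\<^sub>F N in sequentially. real (N div 2) / real N \<le> real N / (2 * real N)"
    using hl_d by simp
  show "(\<lambda>N. (real N - 1) / (2 * real N)) \<longlonglongrightarrow> 1/2" by real_asymp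
  show "(\<lambda>N. real N / (2 * real N)) \<longlonglongrightarrow> 1/2" by real_asymp
qed

lemma hasd_comp:
  assumes "hasd S x" and h: "filterlim h at_top sequentially" and hl: "(\<lambda>N. real (h N) / real N) \<longlonglongrightarrow> 1/2"
  shows "(\<lambda>N. real (card (S \<inter> {..<h N})) / real N) \<longlonglongrightarrow> x / 2"
proof -
  have "(\<lambda>N. real (card (S \<inter> {..<h N})) / real (h N)) \<longlonglongrightarrow> x"
    using assms(1) h unfolding hasd_def by (rule filterlim_compose)
  then have "(\<lambda>N. real (card (S \<inter> {..<h N})) / real (h N) * (real (h N) / real N)) \<longlonglongrightarrow> x * (1/2)"
    using hl by (rule tendsto_mult)
  moreover have "(\<lambda>N. real (card (S \<inter> {..<h N})) / real (h N) * (real (h N) / real N)) = (\<lambda>N. real (card (S \<inter> {..<h N})) / real N)"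
    apply (rule ext) subgoal for N by (cases "h N = 0") auto done
  ultimately show ?thesis by simp
qed

lemma hasd_mix:
  assumes "hasd {m. P (2*m)} x" "hasd {m. P (2*m+1)} y"
  shows "hasd {n. P n} ((x+y)/2)"
proof -
  have h1: "filterlim (\<lambda>N::nat. (N+1) div 2) at_top sequentially"
    unfolding filterlim_at_top eventually_sequentially
  proof
    fix Z :: nat show "\<exists>N. \<forall>n\<ge>N. Z \<le> (n+1) div 2" by (rule exI[of _ "2*Z"]) auto
  qed
  have h2: "filterlim (\<lambda>N::nat. N div 2) at_top sequentially"
    unfolding filterlim_at_top eventually_sequentially
  proof
    fix Z :: nat show "\<exists>N. \<forall>n\<ge>N. Z \<le> n div 2" by (rule exI[of _ "2*Z"]) auto
  qed
  have "(\<lambda>N. real (card ({m. P (2*m)} \<inter> {..<(N+1) div 2})) / real N + real (card ({m. P (2*m+1)} \<inter> {..<N div 2})) / real N) \<longlonglongrightarrow> x/2 + y/2"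
    by (intro tendsto_add hasd_comp assms h1 h2 half_lim1 half_lim2)
  then show ?thesis unfolding hasd_def cnt_split[of P] by (simp add: add_divide_distrib)
qed

definition Aset :: "nat \<Rightarrow> int \<Rightarrow> nat set" where "Aset t k = {m. d t (2*m) = k}"
definition Bset :: "nat \<Rightarrow> int \<Rightarrow> nat set" where "Bset t k = {m. d t (2*m+1) = k}"
definition HD :: "nat \<Rightarrow> bool" where
  "HD t \<longleftrightarrow> (\<forall>k. hasd (Aset t k) (a t k) \<and> hasd (Bset t k) (b t k))"

lemma a_eq: "a t k = asym_density (Aset t k)" unfolding a_def Aset_def by simp
lemma b_eq: "b t k = asym_density (Bset t k)" unfolding b_def Bset_def by simp

lemma HD_intro:
  assumes "\<And>k. \<exists>x. hasd (Aset t k) x" "\<And>k. \<exists>y. hasd (Bset t k) y"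
  shows "HD t"
  unfolding HD_def a_eq b_eq
proof
  fix k
  obtain x y where "hasd (Aset t k) x" "hasd (Bset t k) y" using assms by blast
  then show "hasd (Aset t k) (asym_density (Aset t k)) \<and> hasd (Bset t k) (asym_density (Bset t k))"
    using hasd_density by metis
qed

lemma HD_A: "HD t \<Longrightarrow> hasd (Aset t k) (a t k)" unfolding HD_def by blast
lemma HD_B: "HD t \<Longrightarrow> hasd (Bset t k) (b t k)" unfolding HD_def by blast

lemma hasd_UNIV: "hasd UNIV 1"
proof -
  have "(\<lambda>N. real N / real N) \<longlonglongrightarrow> (1::real)" by real_asymp
  then show ?thesis unfolding hasd_def by simp
qed

lemma hasd_empty: "hasd {} 0" unfolding hasd_def by simp

lemma hasd_const: "hasd {j. Q} (if Q then 1 else 0)"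
  by (cases Q) (simp_all add: hasd_UNIV hasd_empty)

lemma rec_A_even: "HD s \<Longrightarrow> hasd (Aset (2 * s) k) ((a s k + b s k)/2)"
proof -
  assume h: "HD s"
  have "Aset (2 * s) k = {n. d s n = k}" unfolding Aset_def d_ee by (rule refl)
  moreover have "hasd {n. d s n = k} ((a s k + b s k)/2)"
    by (rule hasd_mix) (use HD_A[OF h, of k] HD_B[OF h, of k] in \<open>simp_all add: Aset_def Bset_def\<close>)
  ultimately show ?thesis by simp
qed

lemma rec_B_even: "HD s \<Longrightarrow> hasd (Bset (2 * s) k) ((a s (k - ind (odd s)) + b s (k + ind (odd s)))/2)"
proof -
  assume h: "HD s"
  have "Bset (2 * s) k = {n. d s n + ind (odd (n+s)) - ind (odd n) = k}" unfolding Bset_def d_eo by (rule refl)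
  moreover have "hasd {n. d s n + ind (odd (n+s)) - ind (odd n) = k} ((a s (k - ind (odd s)) + b s (k + ind (odd s)))/2)"
  proof (rule hasd_mix)
    have "{m. d s (2*m) + ind (odd (2*m+s)) - ind (odd (2*m)) = k} = Aset s (k - ind (odd s))"
      unfolding Aset_def ind_def by auto
    then show "hasd {m. d s (2*m) + ind (odd (2*m+s)) - ind (odd (2*m)) = k} (a s (k - ind (odd s)))"
      using HD_A[OF h] by simp
    have "{m. d s (2*m+1) + ind (odd (2*m+1+s)) - ind (odd (2*m+1)) = k} = Bset s (k + ind (odd s))"
      unfolding Bset_def ind_def by auto
    then show "hasd {m. d s (2*m+1) + ind (odd (2*m+1+s)) - ind (odd (2*m+1)) = k} (b s (k + ind (odd s)))"
      using HD_B[OF h] by simp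
  qed
  ultimately show ?thesis by simp
qed

lemma rec_A_odd: "HD s \<Longrightarrow> hasd (Aset (2 * s + 1) k) ((a s (k - ind (odd s)) + b s (k - ind (even s)))/2)"
proof -
  assume h: "HD s"
  have "Aset (2 * s + 1) k = {n. d s n + ind (odd (n+s)) = k}" unfolding Aset_def d_oe by (rule refl)
  moreover have "hasd {n. d s n + ind (odd (n+s)) = k} ((a s (k - ind (odd s)) + b s (k - ind (even s)))/2)"
  proof (rule hasd_mix)
    have "{m. d s (2*m) + ind (odd (2*m+s)) = k} = Aset s (k - ind (odd s))"
      unfolding Aset_def ind_def by auto
    then show "hasd {m. d s (2*m) + ind (odd (2*m+s)) = k} (a s (k - ind (odd s)))"
      using HD_A[OF h] by simp
    have "{m. d s (2*m+1) + ind (odd (2*m+1+s)) = k} = Bset s (k - ind (even s))"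
      unfolding Bset_def ind_def by auto
    then show "hasd {m. d s (2*m+1) + ind (odd (2*m+1+s)) = k} (b s (k - ind (even s)))"
      using HD_B[OF h] by simp
  qed
  ultimately show ?thesis by simp
qed

lemma rec_B_odd: "HD (s+1) \<Longrightarrow> hasd (Bset (2 * s + 1) k) ((a (s+1) k + b (s+1) (k + 1))/2)"
proof -
  assume h: "HD (s+1)"
  have "Bset (2 * s + 1) k = {n. d (s+1) n - ind (odd n) = k}" unfolding Bset_def d_oo by (rule refl)
  moreover have "hasd {n. d (s+1) n - ind (odd n) = k} ((a (s+1) k + b (s+1) (k + 1))/2)"
  proof (rule hasd_mix)
    have "{m. d (s+1) (2*m) - ind (odd (2*m)) = k} = Aset (s+1) k"
      unfolding Aset_def ind_def by auto
    then show "hasd {m. d (s+1) (2*m) - ind (odd (2*m)) = k} (a (s+1) k)"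
      using HD_A[OF h] by simp
    have "{m. d (s+1) (2*m+1) - ind (odd (2*m+1)) = k} = Bset (s+1) (k + 1)"
      unfolding Bset_def ind_def by auto
    then show "hasd {m. d (s+1) (2*m+1) - ind (odd (2*m+1)) = k} (b (s+1) (k+1))"
      using HD_B[OF h] by simp
  qed
  ultimately show ?thesis by simp
qed

lemma d0: "d 0 n = 0" unfolding d_def by simp

lemma HD0: "HD 0"
proof (rule HD_intro)
  fix k
  have "Aset 0 k = {j. k = 0}" "Bset 0 k = {j. k = 0}" unfolding Aset_def Bset_def by (auto simp: d0)
  then show "\<exists>x. hasd (Aset 0 k) x" "\<exists>x. hasd (Bset 0 k) x" using hasd_const by metis+
qed

lemma d1_even: "d 1 (2*m) = ind (odd m)"
  using d_oe[of 0 m] by (simp add: d0)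

lemma d1_odd: "d 1 (2*m+1) = d 1 m - ind (odd m)"
  using d_oo[of 0 m] by simp

lemma d1_le: "d 1 n \<le> 1"
proof (induction n rule: less_induct)
  case (less n)
  show ?case
  proof (cases "even n")
    case True
    then obtain m where "n = 2*m" by blast
    then show ?thesis unfolding \<open>n = 2*m\<close> d1_even by (simp add: ind_def)
  next
    case False
    then obtain m where m: "n = 2*m+1" using oddE by blast
    then have "d 1 m \<le> 1" using less by simp
    then show ?thesis unfolding m d1_odd by (simp add: ind_def)
  qed
qed

lemma A1: "hasd (Aset 1 k) (((if 0 = k then 1 else 0) + (if 1 = k then 1 else 0))/2)"
proof -
  have "Aset 1 k = {m. ind (odd m) = k}" unfolding Aset_def d1_even by (rule refl)
  moreover have "hasd {m. ind (odd m) = k} (((if 0 = k then 1 else 0) + (if 1 = k then 1 else 0))/2)"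
    by (rule hasd_mix) (simp_all add: ind_def hasd_UNIV hasd_empty)
  ultimately show ?thesis by simp
qed

lemma B1_step: "hasd (Bset 1 (k+1)) y \<Longrightarrow> \<exists>z. hasd (Bset 1 k) z"
proof -
  assume y: "hasd (Bset 1 (k+1)) y"
  have "Bset 1 k = {n. d 1 n - ind (odd n) = k}" unfolding Bset_def d1_odd by (rule refl)
  moreover have "hasd {n. d 1 n - ind (odd n) = k} ((((if 0 = k then 1 else 0) + (if 1 = k then 1 else 0))/2 + y)/2)"
  proof (rule hasd_mix)
    have "{m. d 1 (2*m) - ind (odd (2*m)) = k} = Aset 1 k" unfolding Aset_def ind_def by auto
    then show "hasd {m. d 1 (2*m) - ind (odd (2*m)) = k} (((if 0 = k then 1 else 0) + (if 1 = k then 1 else 0))/2)"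
      using A1 by simp
    have "{m. d 1 (2*m+1) - ind (odd (2*m+1)) = k} = Bset 1 (k+1)" unfolding Bset_def ind_def by auto
    then show "hasd {m. d 1 (2*m+1) - ind (odd (2*m+1)) = k} y" using y by simp
  qed
  ultimately show ?thesis by auto
qed

lemma HD1: "HD 1"
proof (rule HD_intro)
  fix k
  show "\<exists>x. hasd (Aset 1 k) x" using A1 by blast
  show "\<exists>x. hasd (Bset 1 k) x"
  proof (cases "k \<le> 2")
    case True
    then show ?thesis
    proof (induction k rule: int_le_induct)
      case base
      have "Bset 1 2 = {}" unfolding Bset_def using d1_le by (auto simp: not_le) (smt (verit) d1_le)
      then show ?case using hasd_empty by auto
    next
      case (step i)
      then show ?case using B1_step[of "i - 1"] by auto
    qed
  next
    case False
    have "Bset 1 k = {}" unfolding Bset_def using d1_le False by (smt (verit) empty_Collect_eq)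
    then show ?thesis using hasd_empty by auto
  qed
qed

lemma HD_all: "HD t"
proof (induction t rule: less_induct)
  case (less t)
  show ?case
  proof (cases "t \<le> 1")
    case True
    then show ?thesis using HD0 HD1 by (cases t) auto
  next
    case False
    show ?thesis
    proof (cases "even t")
      case True
      then obtain s where s: "t = 2 * s" by blast
      then have "HD s" using less False by simp
      then show ?thesis unfolding s by (intro HD_intro) (use rec_A_even rec_B_even in blast)+
    next
      case odd: False
      then obtain s where s: "t = 2 * s + 1" using oddE by blast
      then have "HD s" "HD (s+1)" using less False by simp_all
      then show ?thesis unfolding s by (intro HD_intro) (use rec_A_odd rec_B_odd in blast)+
    qed
  qed
qed

lemma a_even: "a (2 * s) = mix (a s) (b s)"
  unfolding mix_def by (rule ext, rule hasd_density[OF rec_A_even[OF HD_all], folded a_eq])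
lemma b_even: "b (2 * s) = mix (shift (ind (odd s)) (a s)) (shift (- ind (odd s)) (b s))"
proof (rule ext)
  fix k
  have "b (2 * s) k = (a s (k - ind (odd s)) + b s (k + ind (odd s)))/2"
    using hasd_density[OF rec_B_even[OF HD_all, of s k]] unfolding b_eq[of "2 * s" k] by simp
  then show "b (2 * s) k = mix (shift (ind (odd s)) (a s)) (shift (- ind (odd s)) (b s)) k"
    unfolding mix_def shift_def by simp
qed
lemma a_odd: "a (2 * s + 1) = mix (shift (ind (odd s)) (a s)) (shift (ind (even s)) (b s))"
proof (rule ext)
  fix k
  have "a (2 * s + 1) k = (a s (k - ind (odd s)) + b s (k - ind (even s)))/2"
    using hasd_density[OF rec_A_odd[OF HD_all, of s k]] unfolding a_eq[of "2 * s + 1" k] by simp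
  then show "a (2 * s + 1) k = mix (shift (ind (odd s)) (a s)) (shift (ind (even s)) (b s)) k"
    unfolding mix_def shift_def by simp
qed
lemma b_odd: "b (2 * s + 1) = mix (a (s+1)) (shift (-1) (b (s+1)))"
proof (rule ext)
  fix k
  have "b (2 * s + 1) k = (a (s+1) k + b (s+1) (k + 1))/2"
    using hasd_density[OF rec_B_odd[OF HD_all, of s k]] unfolding b_eq[of "2 * s + 1" k] by simp
  then show "b (2 * s + 1) k = mix (a (s+1)) (shift (-1) (b (s+1))) k"
    unfolding mix_def shift_def by simp
qed
lemma a_one: "a 1 = (\<lambda>k. if k = 0 \<or> k = 1 then 1/2 else 0)"
  by (rule ext, subst hasd_density[OF A1, folded a_eq]) auto
lemma a_zero: "a 0 = (\<lambda>k. if k = 0 then 1 else 0)"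
proof (rule ext)
  fix k
  have "Aset 0 k = {j. k = 0}" unfolding Aset_def by (auto simp: d0)
  then show "a 0 k = (if k = 0 then 1 else 0)" unfolding a_eq using hasd_density[OF hasd_const] by metis
qed
lemma b_zero: "b 0 = (\<lambda>k. if k = 0 then 1 else 0)"
proof (rule ext)
  fix k
  have "Bset 0 k = {j. k = 0}" unfolding Bset_def by (auto simp: d0)
  then show "b 0 k = (if k = 0 then 1 else 0)" unfolding b_eq using hasd_density[OF hasd_const] by metis
qed

lemma b_one_rec: "b 1 = mix (a 1) (shift (-1) (b 1))"
  using b_odd[of 0] by simp


lemma a_one_S: "a (Suc 0) = (\<lambda>k. if k = 0 \<or> k = 1 then 1/2 else 0)"
  using a_one by simp

lemma abs_le_sq: "\<bar>x::real\<bar> \<le> 1 + x^2"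
proof (cases "\<bar>x\<bar> \<le> 1")
  case True then show ?thesis by (smt (verit) zero_le_power2)
next
  case False
  have "\<bar>x\<bar> * 1 \<le> \<bar>x\<bar> * \<bar>x\<bar>" by (rule mult_left_mono) (use False in auto)
  then show ?thesis by (simp add: power2_eq_square abs_mult_self_eq)
qed

lemma hasd_nonneg: "hasd S x \<Longrightarrow> 0 \<le> x"
  unfolding hasd_def by (rule LIMSEQ_le_const) auto

lemma b_nonneg: "0 \<le> b t k" using hasd_nonneg[OF HD_B[OF HD_all]] .

lemma b1_big: "2 \<le> k \<Longrightarrow> b 1 k = 0"
proof -
  assume k: "2 \<le> k"
  have "Bset 1 k = {}" unfolding Bset_def using d1_le k by (smt (verit) empty_Collect_eq)
  then show ?thesis unfolding b_eq using hasd_density[OF hasd_empty] by simp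
qed

lemma b1_pt: "b 1 k = (a 1 k + b 1 (k+1))/2"
  using fun_cong[OF b_one_rec, of k] unfolding mix_def shift_def by simp

definition g :: "int \<Rightarrow> real" where "g k = (if k \<le> 1 then (1/2)^(nat (-k)) else 0)"

lemma b1_le_g: "b 1 k \<le> g k"
proof (cases "k \<le> 2")
  case False then show ?thesis using b1_big by (simp add: g_def)
next
  case True
  then show ?thesis
  proof (induction k rule: int_le_induct)
    case base then show ?case using b1_big by (simp add: g_def)
  next
    case (step i)
    have e: "b 1 (i - 1) = (a 1 (i - 1) + b 1 i)/2" using b1_pt[of "i - 1"] by simp
    consider "i = 2" | "i = 1" | "i \<le> 0" using step(1) by linarith
    then show ?case
    proof cases
      case 1 then show ?thesis using e b1_big[of 2] by (simp add: a_one a_one_S g_def)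
    next
      case 2 then show ?thesis using e step(2) by (simp add: a_one a_one_S g_def)
    next
      case 3
      have "nat (- (i - 1)) = Suc (nat (-i))" using 3 by simp
      then have "g (i - 1) = g i / 2" using 3 by (simp add: g_def)
      then show ?thesis using e step(2) 3 by (simp add: a_one a_one_S)
    qed
  qed
qed

lemma geo_summable: "summable (\<lambda>n::nat. (real n + 1)^2 * (1/2)^n)"
proof (rule summable_ratio_test[of "3/4" 4])
  fix n :: nat assume n: "4 \<le> n"
  have "2 * (real n + 2)^2 \<le> 3 * (real n + 1)^2"
  proof -
    have "real n * real n \<ge> 4 * real n" using n by (simp add: mult_right_mono)
    moreover have "real n \<ge> 4" using n by simp
    moreover have "2 * (real n + 2)^2 = 2 * (real n * real n) + 8 * real n + 8" by (simp add: power2_eq_square algebra_simps)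
    moreover have "3 * (real n + 1)^2 = 3 * (real n * real n) + 6 * real n + 3" by (simp add: power2_eq_square algebra_simps)
    ultimately show ?thesis by linarith
  qed
  then have le: "(real n + 2)^2 / 2 \<le> 3/4 * (real n + 1)^2" by simp
  have "(real (Suc n) + 1)^2 * (1/2)^(Suc n) = ((real n + 2)^2 / 2) * (1/2)^n" by (simp add: add.commute)
  also have "\<dots> \<le> (3/4 * (real n + 1)^2) * (1/2)^n" by (rule mult_right_mono[OF le]) simp
  finally show "norm ((real (Suc n) + 1)^2 * (1/2)^(Suc n)) \<le> 3/4 * norm ((real n + 1)^2 * (1/2)^n)"
    by simp
qed simp


lemma g_summable: "(\<lambda>k. (1 + (real_of_int k)^2) * g k) summable_on UNIV"
proof -
  have s1: "(\<lambda>n::nat. 4 * ((real n + 1)^2 * (1/2)^n)) summable_on UNIV"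
    by (rule summable_on_cmult_right) (simp add: summable_on_UNIV_nonneg_real_iff geo_summable)
  have bnd: "(1 + (real_of_int (1 - int n))^2) * g (1 - int n) \<le> 4 * ((real n + 1)^2 * (1/2)^n)" for n
  proof -
    have gb: "g (1 - int n) \<le> 2 * (1/2)^n"
    proof (cases n)
      case 0 then show ?thesis by (simp add: g_def)
    next
      case (Suc m)
      then have "nat (- (1 - int n)) = m" by simp
      then show ?thesis using Suc by (simp add: g_def)
    qed
    have g0: "0 \<le> g (1 - int n)" by (simp add: g_def)
    have pb: "1 + (real_of_int (1 - int n))^2 \<le> 2 * (real n + 1)^2"
      by (simp add: power2_eq_square algebra_simps)
    have "(1 + (real_of_int (1 - int n))^2) * g (1 - int n) \<le> (2 * (real n + 1)^2) * (2 * (1/2)^n)"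
      by (rule mult_mono[OF pb gb]) (simp_all add: g0)
    then show ?thesis by simp
  qed
  have s2: "(\<lambda>n::nat. (1 + (real_of_int (1 - int n))^2) * g (1 - int n)) summable_on UNIV"
    by (rule summable_on_comparison_test[OF s1]) (use bnd in \<open>auto simp: g_def\<close>)
  have bij: "bij_betw (\<lambda>n::nat. 1 - int n) UNIV {..1}"
    by (rule bij_betwI[of _ _ _ "\<lambda>k. nat (1 - k)"]) auto
  have s3: "(\<lambda>k. (1 + (real_of_int k)^2) * g k) summable_on {..1}"
    using summable_on_reindex_bij_betw[OF bij, of "\<lambda>k. (1 + (real_of_int k)^2) * g k"] s2 by simp
  have "(\<lambda>k. (1 + (real_of_int k)^2) * g k) summable_on UNIV \<longleftrightarrow> (\<lambda>k. (1 + (real_of_int k)^2) * g k) summable_on {..1}"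
    by (rule summable_on_cong_neutral) (auto simp: g_def)
  then show ?thesis using s3 by simp
qed

lemma good_dom:
  assumes "\<And>k. 0 \<le> p k" "\<And>k. p k \<le> g k"
  shows "good p"
proof -
  have "SW w p" if w: "\<And>k. \<bar>w k\<bar> \<le> 1 + (real_of_int k)^2" for w
  proof -
    have "(\<lambda>k. norm (w k * p k)) summable_on UNIV"
    proof (rule summable_on_comparison_test[OF g_summable])
      fix k
      have "\<bar>w k\<bar> * p k \<le> (1 + (real_of_int k)^2) * g k"
        by (rule mult_mono) (use w assms in auto)
      then show "norm (w k * p k) \<le> (1 + (real_of_int k)^2) * g k" using assms(1)[of k] by (simp add: abs_mult)
    qed simp
    then show ?thesis unfolding SW_def using summable_on_iff_abs_summable_on_real by blast
  qed
  moreover have "\<bar>real_of_int k\<bar> \<le> 1 + (real_of_int k)^2" for k by (rule abs_le_sq)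
  ultimately show ?thesis unfolding good_def by simp
qed

definition mu :: "nat \<Rightarrow> real" where "mu t = (if odd t then 1/2 else 0)"

definition G :: "nat \<Rightarrow> bool" where
  "G t \<longleftrightarrow> good (a t) \<and> good (b t) \<and> W w0 (a t) = 1 \<and> W w0 (b t) = 1 \<and> W w1 (a t) = mu t \<and> W w1 (b t) = - mu t"

lemma ind_real: "real_of_int (ind P) = (if P then 1 else 0)" by (simp add: ind_def)

lemma G0: "G 0"
proof -
  have h: "good (a 0)" "W w (a 0) = (\<Sum>k\<in>{0}. w k * a 0 k)" for w
    by (rule good_fin[of "{0}"], simp, simp add: a_zero)+
  have h': "good (b 0)" "W w (b 0) = (\<Sum>k\<in>{0}. w k * b 0 k)" for w
    by (rule good_fin[of "{0}"], simp, simp add: b_zero)+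
  show ?thesis unfolding G_def using h h' by (simp add: a_zero b_zero mu_def)
qed

lemma G1: "G 1"
proof -
  have h: "good (a 1)" "W w (a 1) = (\<Sum>k\<in>{0,1}. w k * a 1 k)" for w
    by (rule good_fin[of "{0,1}"], simp, simp add: a_one a_one_S)+
  have gb: "good (b 1)" by (rule good_dom) (use b_nonneg b1_le_g in auto)
  have sa0: "W w0 (a 1) = 1" and sa1: "W w1 (a 1) = 1/2" using h by (simp_all add: a_one a_one_S)
  have sh: "good (shift (-1) (b 1))" "W w0 (shift (-1) (b 1)) = W w0 (b 1)"
    "W w1 (shift (-1) (b 1)) = W w1 (b 1) - W w0 (b 1)"
    using good_shift[OF gb, of "-1"] by simp_all
  have ga: "good (a 1)" using h by simp
  have "W w0 (b 1) = (W w0 (a 1) + W w0 (shift (-1) (b 1)))/2"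
    by (subst b_one_rec, rule W_mix) (use ga sh in \<open>auto simp: good_def\<close>)
  then have b0: "W w0 (b 1) = 1" using sa0 sh by simp
  have "W w1 (b 1) = (W w1 (a 1) + W w1 (shift (-1) (b 1)))/2"
    by (subst b_one_rec, rule W_mix) (use ga sh in \<open>auto simp: good_def\<close>)
  then have b1: "W w1 (b 1) = -1/2" using sa1 sh b0 by simp
  show ?thesis unfolding G_def using ga gb sa0 sa1 b0 b1 by (simp add: mu_def)
qed

lemma Wmix_good: "good p \<Longrightarrow> good q \<Longrightarrow> W w0 (mix p q) = (W w0 p + W w0 q)/2 \<and> W w1 (mix p q) = (W w1 p + W w1 q)/2 \<and> W w2 (mix p q) = (W w2 p + W w2 q)/2"
  unfolding good_def using W_mix by blast

lemma G_all: "G t"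
proof (induction t rule: less_induct)
  case (less t)
  show ?case
  proof (cases "t \<le> 1")
    case True
    then show ?thesis using G0 G1 by (cases t) auto
  next
    case False
    show ?thesis
    proof (cases "even t")
      case True
      then obtain s where s: "t = 2 * s" by blast
      then have "G s" using less False by simp
      then have ga: "good (a s)" and gb: "good (b s)" and m: "W w0 (a s) = 1" "W w0 (b s) = 1" "W w1 (a s) = mu s" "W w1 (b s) = - mu s"
        unfolding G_def by auto
      note sa = good_shift[OF ga, of "ind (odd s)"] and sb = good_shift[OF gb, of "- ind (odd s)"]
      have "good (a t)" "good (b t)" unfolding s a_even b_even using ga gb sa sb by (simp_all add: good_mix)
      moreover have "W w0 (a t) = 1" "W w1 (a t) = mu t" unfolding s a_even using Wmix_good[OF ga gb] m
        by (simp_all add: mu_def)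
      moreover have "W w0 (b t) = 1" "W w1 (b t) = - mu t" unfolding s b_even using Wmix_good[OF sa(1) sb(1)] m sa sb
        by (simp_all add: mu_def ind_real)
      ultimately show ?thesis unfolding G_def by simp
    next
      case odd: False
      then obtain s where s: "t = 2 * s + 1" using oddE by blast
      then have "G s" "G (s+1)" using less False by simp_all
      then have ga: "good (a s)" and gb: "good (b s)" and m: "W w0 (a s) = 1" "W w0 (b s) = 1" "W w1 (a s) = mu s" "W w1 (b s) = - mu s"
        and ga': "good (a (s+1))" and gb': "good (b (s+1))" and m': "W w0 (a (s+1)) = 1" "W w0 (b (s+1)) = 1" "W w1 (a (s+1)) = mu (s+1)" "W w1 (b (s+1)) = - mu (s+1)"
        unfolding G_def by auto
      note sa = good_shift[OF ga, of "ind (odd s)"] and sb = good_shift[OF gb, of "ind (even s)"]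
      note sb' = good_shift[OF gb', of "-1"]
      have "good (a t)" "good (b t)" unfolding s a_odd b_odd using ga' sa sb sb' by (simp_all add: good_mix)
      moreover have "W w0 (a t) = 1" "W w1 (a t) = mu t" unfolding s a_odd using Wmix_good[OF sa(1) sb(1)] m sa sb
        by (simp_all add: mu_def ind_real)
      moreover have "W w0 (b t) = 1" "W w1 (b t) = - mu t" unfolding s b_odd using Wmix_good[OF ga' sb'(1)] m' sb'
        by (simp_all add: mu_def)
      ultimately show ?thesis unfolding G_def by simp
    qed
  qed
qed

definition Sf :: "nat \<Rightarrow> real" where "Sf t = W w2 (a t) + W w2 (b t)"

lemma Gd: "good (a t)" "good (b t)" "W w0 (a t) = 1" "W w0 (b t) = 1" "W w1 (a t) = mu t" "W w1 (b t) = - mu t"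
  using G_all[of t] unfolding G_def by auto

lemma L1: "W w2 (a (2 * s)) = Sf s / 2"
  unfolding a_even Sf_def using Wmix_good[OF Gd(1) Gd(2)] by simp

lemma L2: "W w2 (b (2 * s)) = Sf s / 2 + (if odd s then 2 else 0)"
proof -
  note sa = good_shift[OF Gd(1)[of s], of "ind (odd s)"] and sb = good_shift[OF Gd(2)[of s], of "- ind (odd s)"]
  show ?thesis unfolding b_even Sf_def using Wmix_good[OF sa(1) sb(1)] sa sb Gd[of s]
    by (simp add: ind_real mu_def field_simps)
qed

lemma L3: "W w2 (a (2 * s + 1)) = (Sf s + 1 + 2 * mu s) / 2"
proof -
  note sa = good_shift[OF Gd(1)[of s], of "ind (odd s)"] and sb = good_shift[OF Gd(2)[of s], of "ind (even s)"]
  have e: "W w2 (a (2 * s + 1)) = (W w2 (shift (ind (odd s)) (a s)) + W w2 (shift (ind (even s)) (b s)))/2"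
    unfolding a_odd using Wmix_good[OF sa(1) sb(1)] by simp
  show ?thesis
  proof (cases "odd s")
    case True
    then have "ind (odd s) = 1" "ind (even s) = 0" by (simp_all add: ind_def)
    then show ?thesis unfolding e Sf_def using sa sb Gd[of s] True by (simp add: mu_def field_simps)
  next
    case False
    then have "ind (odd s) = 0" "ind (even s) = 1" by (simp_all add: ind_def)
    then show ?thesis unfolding e Sf_def using sa sb Gd[of s] False by (simp add: mu_def field_simps)
  qed
qed

lemma L4: "W w2 (b (2 * s + 1)) = (Sf (s+1) + 1 + 2 * mu (s+1)) / 2"
proof -
  note sb = good_shift[OF Gd(2)[of "s+1"], of "-1"]
  show ?thesis unfolding b_odd Sf_def using Wmix_good[OF Gd(1)[of "s+1"] sb(1)] sb Gd[of "s+1"]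
    by (simp add: field_simps)
qed

lemma mu_sum: "mu s + mu (s+1) = 1/2" by (simp add: mu_def)

lemma S_even: "Sf (2 * s) = Sf s + (if odd s then 2 else 0)"
  using L1[of s] L2[of s] unfolding Sf_def[of "2 * s"] by simp

lemma S_odd: "Sf (2 * s + 1) = (Sf s + Sf (s+1) + 3) / 2"
  using L3[of s] L4[of s] mu_sum[of s] unfolding Sf_def[of "2 * s + 1"] by (simp add: field_simps)

lemma h1: "\<bar>y::real\<bar> \<le> 3 \<Longrightarrow> 0 \<le> (c::real) \<Longrightarrow> c \<le> 2 \<Longrightarrow> \<bar>(y+3)/2 - c\<bar> \<le> 3" unfolding abs_le_iff by argo
lemma h2: "\<bar>y::real\<bar> \<le> 3 \<Longrightarrow> 0 \<le> (c::real) \<Longrightarrow> c \<le> 2 \<Longrightarrow> \<bar>(y-3)/2 + c\<bar> \<le> 3" unfolding abs_le_iff by argo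
lemma h3: "\<bar>S' - (S::real)\<bar> \<le> 3 \<Longrightarrow> \<bar>m - m'\<bar> \<le> 1/2 \<Longrightarrow> \<bar>(S + 1 + 2*m)/2 - (S' + 1 + 2*m')/2\<bar> \<le> (2::real)" unfolding abs_le_iff by argo

lemma S_diff: "\<bar>Sf (s+1) - Sf s\<bar> \<le> 3"
proof (induction s rule: less_induct)
  case (less s)
  show ?case
  proof (cases "s = 0")
    case True
    then show ?thesis using S_odd[of 0] by simp
  next
    case False
    show ?thesis
    proof (cases "even s")
      case True
      then obtain u where u: "s = 2 * u" by blast
      then have "u < s" using False by simp
      then have ih: "\<bar>Sf (u+1) - Sf u\<bar> \<le> 3" using less by simp
      have "Sf (s+1) - Sf s = (Sf (u+1) - Sf u + 3)/2 - (if odd u then 2 else 0)"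
        unfolding u using S_odd[of u] S_even[of u] by simp
      then show ?thesis by (simp only:) (rule h1[OF ih], simp_all)
    next
      case odd: False
      then obtain u where u: "s = 2 * u + 1" using oddE by blast
      then have "u < s" by simp
      then have ih: "\<bar>Sf (u+1) - Sf u\<bar> \<le> 3" using less by simp
      have e: "s + 1 = 2 * (u+1)" using u by simp
      have "Sf (s+1) - Sf s = Sf (u+1) + (if odd (u+1) then 2 else 0) - (Sf u + Sf (u+1) + 3)/2"
        unfolding e S_even[of "u+1"] unfolding u using S_odd[of u] by simp
      also have "\<dots> = (Sf (u+1) - Sf u - 3)/2 + (if odd (u+1) then 2 else 0)" by argo
      finally show ?thesis by (simp only:) (rule h2[OF ih], simp_all)
    qed
  qed
qed

theorem lemma3p6:
  fixes t :: nat
  shows "\<bar>v_alpha t - v_beta t\<bar> \<le> 48"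
proof -
  have va: "v_alpha t = W w2 (a t) - (mu t)^2" unfolding v_alpha_def using variance_eq[OF Gd(1) Gd(3)] Gd(5) by simp
  have vb: "v_beta t = W w2 (b t) - (mu t)^2" unfolding v_beta_def using variance_eq[OF Gd(2) Gd(4)] Gd(6) by simp
  have "\<bar>W w2 (a t) - W w2 (b t)\<bar> \<le> 2"
  proof (cases "even t")
    case True
    then obtain s where s: "t = 2 * s" by blast
    show ?thesis unfolding s L1 L2 by simp
  next
    case False
    then obtain s where s: "t = 2 * s + 1" using oddE by blast
    have "\<bar>Sf (s+1) - Sf s\<bar> \<le> 3" by (rule S_diff)
    moreover have "\<bar>mu s - mu (s+1)\<bar> \<le> 1/2" by (simp add: mu_def)
    ultimately show ?thesis unfolding s L3 L4 by (rule h3)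
  qed
  then show ?thesis using va vb by simp
qed

end
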